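(* Let $X\subseteq\mathbb{R}^n$ be a nonempty closed convex set with $0\in X$, $\|\cdot\|$ the Euclidean norm, $D(x\|x')=\frac12\|x-x'\|^2$, and $\max_{x,x'\in X}D(x\|x')\le F^2$. Let $f_1,f_2,\dots$ be i.i.d. random convex differentiable functions $\mathbb{R}^n\to\mathbb{R}$ drawn from a fixed distribution $p$, such that almost surely $\|\nabla f_t(x)\|\le L$ for all $x\in X$ and $\|\nabla f_t(x)-\nabla f_t(x')\|\le H\|x-x'\|$ for all $x,x'$, where $H\ge\frac{L}{4F\sqrt\tau}$. Let $f^*(x)=\mathbb{E}_{f\sim p}[f(x)]$ and let $x^*\in X$ be a minimizer of $f^*$ over $X$. Let $\tau\ge1$, $T\in\mathbb{N}$, and run delayed stochastic gradient descent: $x_1=\dots=x_{\tau+1}=0$, $g_t=\nabla f_t(x_t)$, $x_{t+1}=\operatorname{argmin}_{x\in X}\|x-(x_t-\eta_tg_{t-\tau})\|$ for $t=\tau+1,\dots,T+\tau$, with $\eta_t=\sigma/\sqrt{t-\tau}$ and $\sigma=F/L$. Then the regret $R[X]=\sum_{t=1}^T(f_t(x_t)-f_t(x^* ))$ satisfies $$\mathbb{E}[R[X]]\le\Big[28.3F^2H+\tfrac23FL+\tfrac43F^2H\log T\Big]\tau^2+\tfrac83FL\sqrt T.$$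
   Context: $\log$ denotes the natural logarithm. *)

theory Defs
  imports "HOL-Probability.Probability"
begin

definition grad :: "('a::real_inner \<Rightarrow> real) \<Rightarrow> 'a \<Rightarrow> 'a" where
  "grad f x = (THE D. GDERIV f x :> D)"

text \<open>Delayed projected SGD iterates x_1, x_2, ... (index 0 is unused and set to 0).
  x_1 = ... = x_{tau+1} = 0 and for t \<ge> tau+1:
  x_{t+1} = closest point of X to x_t - eta_t * grad f_{t-tau}(x_{t-tau}),
  with eta_t = sigma / sqrt (t - tau).\<close>
fun dsgd :: "'a::euclidean_space set \<Rightarrow> nat \<Rightarrow> real \<Rightarrow> (nat \<Rightarrow> 'a \<Rightarrow> real) \<Rightarrow> nat \<Rightarrow> 'a" where
  "dsgd X \<tau> \<sigma> fs 0 = 0"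
| "dsgd X \<tau> \<sigma> fs (Suc t) =
     (if t \<le> \<tau> then 0
      else closest_point X
             (dsgd X \<tau> \<sigma> fs t
              - (\<sigma> / sqrt (real (t - \<tau>))) *\<^sub>R grad (fs (t - \<tau>)) (dsgd X \<tau> \<sigma> fs (t - \<tau>))))"

end

theory Submission
  imports Defs
begin

lemma grad_exists:
  fixes f :: "'a::euclidean_space \<Rightarrow> real"
  assumes "f differentiable at x"
  shows "GDERIV f x :> grad f x"
proof -
  from assms obtain f' where f': "(f has_derivative f') (at x)"
    unfolding differentiable_def by blast
  have lin: "linear f'" using f' by (simp add: has_derivative_linear)
  define D where "D = (\<Sum>b\<in>Basis. f' b *\<^sub>R b)"
  have eq: "f' = (\<lambda>h. h \<bullet> D)"
  proof
    fix h
    have "f' h = f' (\<Sum>b\<in>Basis. (h \<bullet> b) *\<^sub>R b)" by (simp add: euclidean_representation)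
    also have "\<dots> = (\<Sum>b\<in>Basis. (h \<bullet> b) * f' b)"
      using lin by (simp add: linear_sum linear_scale)
    also have "\<dots> = h \<bullet> D" unfolding D_def by (simp add: inner_sum_right mult.commute)
    finally show "f' h = h \<bullet> D" .
  qed
  have gd: "GDERIV f x :> D" unfolding gderiv_def using f' eq by simp
  have uniq: "\<And>E. GDERIV f x :> E \<Longrightarrow> E = D"
  proof -
    fix E assume "GDERIV f x :> E"
    then have "(\<lambda>h. h \<bullet> E) = (\<lambda>h. h \<bullet> D)"
      using gd unfolding gderiv_def by (rule has_derivative_unique)
    then have "(E - D) \<bullet> E = (E - D) \<bullet> D" by meson
    then have "(E - D) \<bullet> (E - D) = 0" by (simp add: inner_diff_right)
    then show "E = D" by simp
  qed
  have "grad f x = D" unfolding grad_def using gd uniq by (rule the_equality)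
  then show ?thesis using gd by simp
qed

lemma convex_tangent:
  fixes f :: "'a::euclidean_space \<Rightarrow> real"
  assumes cv: "convex_on UNIV f" and d: "GDERIV f c :> D"
  shows "f c + (x - c) \<bullet> D \<le> f x"
proof -
  define g where "g t = f (c + t *\<^sub>R (x - c))" for t
  have cg: "convex_on UNIV g"
    unfolding g_def
  proof (rule convex_onI)
    fix a t u :: real assume a: "0 < a" "a < 1"
    have "c + ((1 - a) *\<^sub>R t + a *\<^sub>R u) *\<^sub>R (x - c) = (1 - a) *\<^sub>R (c + t *\<^sub>R (x - c)) + a *\<^sub>R (c + u *\<^sub>R (x - c))"
      by (simp add: algebra_simps)
    then show "f (c + ((1 - a) *\<^sub>R t + a *\<^sub>R u) *\<^sub>R (x - c)) \<le> (1 - a) * f (c + t *\<^sub>R (x - c)) + a * f (c + u *\<^sub>R (x - c))"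
      using convex_onD[OF cv, of a "c + t *\<^sub>R (x - c)" "c + u *\<^sub>R (x - c)"] a by simp
  qed simp
  have "((\<lambda>t. c + t *\<^sub>R (x - c)) has_derivative (\<lambda>t. t *\<^sub>R (x - c))) (at 0)"
    by (auto intro!: derivative_eq_intros)
  then have "(g has_derivative (\<lambda>t. (t *\<^sub>R (x - c)) \<bullet> D)) (at 0)"
  proof -
    have "(f has_derivative (\<lambda>h. h \<bullet> D)) (at (c + 0 *\<^sub>R (x - c)))" using d unfolding gderiv_def by simp
    from has_derivative_compose[OF \<open>((\<lambda>t. c + t *\<^sub>R (x - c)) has_derivative _) (at 0)\<close> this]
    show ?thesis unfolding g_def o_def by simp
  qed
  then have "(g has_field_derivative ((x - c) \<bullet> D)) (at 0)"
    unfolding has_field_derivative_def by (simp add: mult.commute[of _ "(x - c) \<bullet> D"])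
  then have "g 1 - g 0 \<ge> ((x - c) \<bullet> D) * (1 - 0)"
    by (intro convex_on_imp_above_tangent[OF cg]) auto
  then show ?thesis by (simp add: g_def)
qed

lemma dir_deriv_lim:
  fixes f :: "'a::euclidean_space \<Rightarrow> real"
  assumes d: "GDERIV f x :> D"
  shows "(\<lambda>n. (f (x + (1 / real (Suc n)) *\<^sub>R b) - f x) / (1 / real (Suc n))) \<longlonglongrightarrow> b \<bullet> D"
proof -
  define g where "g t = f (x + t *\<^sub>R b)" for t
  have "((\<lambda>t. x + t *\<^sub>R b) has_derivative (\<lambda>t. t *\<^sub>R b)) (at 0)"
    by (auto intro!: derivative_eq_intros)
  moreover have "(f has_derivative (\<lambda>h. h \<bullet> D)) (at (x + 0 *\<^sub>R b))" using d unfolding gderiv_def by simp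
  ultimately have "(g has_derivative (\<lambda>t. (t *\<^sub>R b) \<bullet> D)) (at 0)"
    unfolding g_def by (rule has_derivative_compose)
  then have "(g has_field_derivative (b \<bullet> D)) (at 0)"
    unfolding has_field_derivative_def by (simp add: mult.commute[of _ "b \<bullet> D"])
  then have lim: "((\<lambda>t. (g t - g 0) / (t - 0)) \<longlongrightarrow> b \<bullet> D) (at 0)"
    by (simp add: has_field_derivative_iff)
  have u: "filterlim (\<lambda>n. 1 / real (Suc n)) (at 0) sequentially"
    unfolding filterlim_at
    by (auto intro!: LIMSEQ_Suc[OF lim_inverse_n'] simp del: of_nat_Suc)
  from filterlim_compose[OF lim u] show ?thesis by (simp add: g_def)
qed

lemma floor_approx_lim:
  fixes y :: real
  shows "(\<lambda>m. real_of_int \<lfloor>real (Suc m) * y\<rfloor> / real (Suc m)) \<longlonglongrightarrow> y"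
proof (rule tendsto_sandwich[of "\<lambda>m. y - 1 / real (Suc m)" _ _ "\<lambda>m. y"])
  show "\<forall>\<^sub>F m in sequentially. y - 1 / real (Suc m) \<le> real_of_int \<lfloor>real (Suc m) * y\<rfloor> / real (Suc m)"
  proof (intro always_eventually allI)
    fix m
    have "real (Suc m) * y < real_of_int \<lfloor>real (Suc m) * y\<rfloor> + 1" by linarith
    then have "real (Suc m) * y - 1 \<le> real_of_int \<lfloor>real (Suc m) * y\<rfloor>" by simp
    then have "(real (Suc m) * y - 1) / real (Suc m) \<le> real_of_int \<lfloor>real (Suc m) * y\<rfloor> / real (Suc m)"
      by (rule divide_right_mono) simp
    moreover have "(real (Suc m) * y - 1) / real (Suc m) = y - 1 / real (Suc m)"
      by (simp add: diff_divide_distrib del: of_nat_Suc)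
    ultimately show "y - 1 / real (Suc m) \<le> real_of_int \<lfloor>real (Suc m) * y\<rfloor> / real (Suc m)"
      by simp
  qed
  show "\<forall>\<^sub>F m in sequentially. real_of_int \<lfloor>real (Suc m) * y\<rfloor> / real (Suc m) \<le> y"
  proof (intro always_eventually allI)
    fix m
    have "real_of_int \<lfloor>real (Suc m) * y\<rfloor> \<le> real (Suc m) * y" by linarith
    then show "real_of_int \<lfloor>real (Suc m) * y\<rfloor> / real (Suc m) \<le> y"
      by (simp add: field_simps del: of_nat_Suc)
  qed
  have "(\<lambda>m. 1 / real (Suc m)) \<longlonglongrightarrow> 0" by (rule LIMSEQ_Suc[OF lim_inverse_n'])
  then show "(\<lambda>m. y - 1 / real (Suc m)) \<longlonglongrightarrow> y" using tendsto_diff[of "\<lambda>_. y" y sequentially] by force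
qed simp

lemma caratheodory_measurable:
  fixes \<phi> :: "'s \<Rightarrow> real ^ 'n \<Rightarrow> real"
  assumes meas: "\<And>x. (\<lambda>s. \<phi> s x) \<in> borel_measurable p"
    and cont: "\<And>s x. s \<in> space p \<Longrightarrow> isCont (\<phi> s) x"
  shows "(\<lambda>z. \<phi> (fst z) (snd z)) \<in> borel_measurable (p \<Otimes>\<^sub>M borel)"
proof (rule borel_measurable_LIMSEQ_metric)
  have [measurable]: "(\<lambda>x::real^'n. x $ i) \<in> borel_measurable borel" for i
    by (intro borel_measurable_continuous_onI continuous_intros)
  define r where "r m x = (\<chi> i. real_of_int \<lfloor>real (Suc m) * x $ i\<rfloor> / real (Suc m))" for m and x :: "real ^ 'n"
  define k where "k m x = (\<lambda>i. \<lfloor>real (Suc m) * x $ i\<rfloor>)" for m and x :: "real ^ 'n"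
  show "(\<lambda>z. \<phi> (fst z) (r m (snd z))) \<in> borel_measurable (p \<Otimes>\<^sub>M borel)" for m
  proof -
    have "(\<lambda>z. (\<lambda>\<kappa> z. \<phi> (fst z) (\<chi> i. real_of_int (\<kappa> i) / real (Suc m))) (k m (snd z)) z) \<in> borel_measurable (p \<Otimes>\<^sub>M borel)"
    proof (rule measurable_compose_countable'[where I=UNIV and f="\<lambda>\<kappa> z. \<phi> (fst z) (\<chi> i. real_of_int (\<kappa> i) / real (Suc m))" and g="\<lambda>z. k m (snd z)"])
      fix \<kappa> :: "'n \<Rightarrow> int"
      show "(\<lambda>z. \<phi> (fst z) (\<chi> i. real_of_int (\<kappa> i) / real (Suc m))) \<in> borel_measurable (p \<Otimes>\<^sub>M borel)"
        using meas by measurable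
    next
      show "(\<lambda>z. k m (snd z)) \<in> measurable (p \<Otimes>\<^sub>M borel) (count_space UNIV)"
        unfolding measurable_count_space_eq2_countable
      proof safe
        fix \<kappa> :: "'n \<Rightarrow> int"
        have "(\<lambda>z. k m (snd z)) -` {\<kappa>} \<inter> space (p \<Otimes>\<^sub>M borel) = {z \<in> space (p \<Otimes>\<^sub>M borel). \<forall>i. \<lfloor>real (Suc m) * snd z $ i\<rfloor> = \<kappa> i}"
          by (auto simp: k_def)
        also have "\<dots> \<in> sets (p \<Otimes>\<^sub>M borel)" by measurable
        finally show "(\<lambda>z. k m (snd z)) -` {\<kappa>} \<inter> space (p \<Otimes>\<^sub>M borel) \<in> sets (p \<Otimes>\<^sub>M borel)" .
      qed auto
    qed simp
    then show ?thesis by (simp add: r_def k_def)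
  qed
  fix z :: "'s \<times> (real ^ 'n)" assume z: "z \<in> space (p \<Otimes>\<^sub>M borel)"
  have "(\<lambda>m. r m (snd z)) \<longlonglongrightarrow> snd z"
    unfolding r_def by (rule vec_tendstoI) (simp only: vec_lambda_beta floor_approx_lim)
  moreover have "isCont (\<phi> (fst z)) (snd z)" using z cont by (auto simp: space_pair_measure)
  ultimately show "(\<lambda>m. \<phi> (fst z) (r m (snd z))) \<longlonglongrightarrow> \<phi> (fst z) (snd z)"
    using isCont_tendsto_compose by blast
qed

lemma grad_measurable:
  fixes \<phi> :: "'s \<Rightarrow> real ^ 'n \<Rightarrow> real"
  assumes meas: "\<And>x. (\<lambda>s. \<phi> s x) \<in> borel_measurable p"
    and diff: "\<And>s x. s \<in> space p \<Longrightarrow> \<phi> s differentiable at x"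
  shows "(\<lambda>z. grad (\<phi> (fst z)) (snd z)) \<in> borel_measurable (p \<Otimes>\<^sub>M borel)"
proof -
  have \<Phi>: "(\<lambda>z. \<phi> (fst z) (snd z)) \<in> borel_measurable (p \<Otimes>\<^sub>M borel)"
  proof (rule caratheodory_measurable[OF meas])
    fix s x assume "s \<in> space p"
    then have "\<phi> s differentiable at x" by (rule diff)
    then show "isCont (\<phi> s) x" by (rule differentiable_imp_continuous_within)
  qed
  have \<Phi>c: "(\<lambda>z. \<phi> (fst z) (snd z + c)) \<in> borel_measurable (p \<Otimes>\<^sub>M borel)" for c
  proof -
    have "(\<lambda>z::'s \<times> (real^'n). (fst z, snd z + c)) \<in> measurable (p \<Otimes>\<^sub>M borel) (p \<Otimes>\<^sub>M borel)"
      by measurable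
    from measurable_compose[OF this \<Phi>] show ?thesis by simp
  qed
  show ?thesis
  proof (rule borel_measurable_euclidean_space[THEN iffD2], rule ballI)
    fix b :: "real^'n" assume b: "b \<in> Basis"
    show "(\<lambda>z. grad (\<phi> (fst z)) (snd z) \<bullet> b) \<in> borel_measurable (p \<Otimes>\<^sub>M borel)"
    proof (rule borel_measurable_LIMSEQ_metric[where f="\<lambda>n z. (\<phi> (fst z) (snd z + (1 / real (Suc n)) *\<^sub>R b) - \<phi> (fst z) (snd z)) / (1 / real (Suc n))"])
      fix n
      show "(\<lambda>z. (\<phi> (fst z) (snd z + (1 / real (Suc n)) *\<^sub>R b) - \<phi> (fst z) (snd z)) / (1 / real (Suc n)))
             \<in> borel_measurable (p \<Otimes>\<^sub>M borel)"
      proof -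
        note [measurable] = \<Phi>c[of "(1 / real (Suc n)) *\<^sub>R b"] \<Phi>
        show ?thesis by measurable
      qed
    next
      fix z :: "'s \<times> (real ^ 'n)" assume z: "z \<in> space (p \<Otimes>\<^sub>M borel)"
      then have "fst z \<in> space p" by (auto simp: space_pair_measure)
      then have "GDERIV (\<phi> (fst z)) (snd z) :> grad (\<phi> (fst z)) (snd z)"
        using diff by (intro grad_exists) auto
      from dir_deriv_lim[OF this, of b]
      show "(\<lambda>n. (\<phi> (fst z) (snd z + (1 / real (Suc n)) *\<^sub>R b) - \<phi> (fst z) (snd z)) / (1 / real (Suc n)))
             \<longlonglongrightarrow> grad (\<phi> (fst z)) (snd z) \<bullet> b"
        by (simp add: inner_commute)
    qed
  qed
qed

lemma dsgd_local:
  assumes "\<forall>i. 1 \<le> i \<and> i < k - \<tau> \<longrightarrow> fs i = fs' i"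
  shows "dsgd X \<tau> \<sigma> fs k = dsgd X \<tau> \<sigma> fs' k"
  using assms
proof (induction k rule: less_induct)
  case (less k)
  show ?case
  proof (cases k)
    case 0 then show ?thesis by simp
  next
    case (Suc m)
    show ?thesis
    proof (cases "m \<le> \<tau>")
      case True then show ?thesis using Suc by simp
    next
      case False
      have "\<forall>i. 1 \<le> i \<and> i < m - \<tau> \<longrightarrow> fs i = fs' i"
      proof (intro allI impI)
        fix i assume i: "1 \<le> i \<and> i < m - \<tau>"
        have "m - \<tau> \<le> Suc m - \<tau>" by simp
        then have "1 \<le> i \<and> i < Suc m - \<tau>" using i by linarith
        then show "fs i = fs' i" using less.prems Suc by blast
      qed
      then have a: "dsgd X \<tau> \<sigma> fs m = dsgd X \<tau> \<sigma> fs' m"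
        using less.IH[of m] Suc by auto
      have "\<forall>i. 1 \<le> i \<and> i < m - \<tau> - \<tau> \<longrightarrow> fs i = fs' i"
      proof (intro allI impI)
        fix i assume i: "1 \<le> i \<and> i < m - \<tau> - \<tau>"
        have "m - \<tau> - \<tau> \<le> Suc m - \<tau>" by simp
        then have "1 \<le> i \<and> i < Suc m - \<tau>" using i by linarith
        then show "fs i = fs' i" using less.prems Suc by blast
      qed
      then have b: "dsgd X \<tau> \<sigma> fs (m - \<tau>) = dsgd X \<tau> \<sigma> fs' (m - \<tau>)"
        using less.IH[of "m - \<tau>"] Suc False by auto
      have "1 \<le> m - \<tau> \<and> m - \<tau> < Suc m - \<tau>" using False by linarith
      then have c: "fs (m - \<tau>) = fs' (m - \<tau>)" using less.prems Suc by blast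
      show ?thesis using Suc False a b c by simp
    qed
  qed
qed

lemma dsgd_measurable:
  fixes X :: "(real ^ 'n) set" and \<phi> :: "'s \<Rightarrow> real ^ 'n \<Rightarrow> real"
  assumes cX: "closed X" "convex X" "X \<noteq> {}"
    and \<Gamma>: "(\<lambda>z. grad (\<phi> (fst z)) (snd z)) \<in> borel_measurable (p \<Otimes>\<^sub>M borel)"
    and I: "{1..<k - \<tau>} \<subseteq> I"
  shows "(\<lambda>f. dsgd X \<tau> \<sigma> (\<lambda>i. \<phi> (f i)) k) \<in> borel_measurable (PiM I (\<lambda>_. p))"
  using I
proof (induction k rule: less_induct)
  case (less k)
  show ?case
  proof (cases k)
    case 0 then show ?thesis by simp
  next
    case (Suc m)
    show ?thesis
    proof (cases "m \<le> \<tau>")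
      case True then show ?thesis using Suc by simp
    next
      case False
      have "{1..<m-\<tau>} \<subseteq> {1..<Suc m - \<tau>}" by auto
      then have "{1..<m-\<tau>} \<subseteq> I" using less.prems Suc by auto
      then have a: "(\<lambda>f. dsgd X \<tau> \<sigma> (\<lambda>i. \<phi> (f i)) m) \<in> borel_measurable (PiM I (\<lambda>_. p))"
        using less.IH[of m] Suc by auto
      have "{1..<m-\<tau>-\<tau>} \<subseteq> {1..<Suc m - \<tau>}" by auto
      then have "{1..<m-\<tau>-\<tau>} \<subseteq> I" using less.prems Suc by auto
      then have b: "(\<lambda>f. dsgd X \<tau> \<sigma> (\<lambda>i. \<phi> (f i)) (m - \<tau>)) \<in> borel_measurable (PiM I (\<lambda>_. p))"
        using less.IH[of "m - \<tau>"] Suc False by auto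
      have "m - \<tau> \<in> {1..<Suc m - \<tau>}" using False by auto
      then have mi: "m - \<tau> \<in> I" using less.prems Suc by blast
      have c: "(\<lambda>f. f (m - \<tau>)) \<in> measurable (PiM I (\<lambda>_. p)) p"
        by (rule measurable_component_singleton[OF mi, where M="\<lambda>_. p"])
      have d: "(\<lambda>f. (f (m - \<tau>), dsgd X \<tau> \<sigma> (\<lambda>i. \<phi> (f i)) (m - \<tau>))) \<in> measurable (PiM I (\<lambda>_. p)) (p \<Otimes>\<^sub>M borel)"
        using c b by (rule measurable_Pair)
      have e: "(\<lambda>f. grad (\<phi> (f (m - \<tau>))) (dsgd X \<tau> \<sigma> (\<lambda>i. \<phi> (f i)) (m - \<tau>))) \<in> borel_measurable (PiM I (\<lambda>_. p))"
        using measurable_compose[OF d \<Gamma>] by simp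
      have cp: "closest_point X \<in> borel_measurable borel"
        by (rule borel_measurable_continuous_onI[OF continuous_on_closest_point[OF cX(2) cX(1) cX(3)]])
      have "(\<lambda>f. dsgd X \<tau> \<sigma> (\<lambda>i. \<phi> (f i)) m - (\<sigma> / sqrt (real (m - \<tau>))) *\<^sub>R grad (\<phi> (f (m - \<tau>))) (dsgd X \<tau> \<sigma> (\<lambda>i. \<phi> (f i)) (m - \<tau>)))
              \<in> borel_measurable (PiM I (\<lambda>_. p))"
        by (rule borel_measurable_diff[OF a borel_measurable_scaleR[OF borel_measurable_const e]])
      from measurable_compose[OF this cp]
      have "(\<lambda>f. closest_point X (dsgd X \<tau> \<sigma> (\<lambda>i. \<phi> (f i)) m - (\<sigma> / sqrt (real (m - \<tau>))) *\<^sub>R grad (\<phi> (f (m - \<tau>))) (dsgd X \<tau> \<sigma> (\<lambda>i. \<phi> (f i)) (m - \<tau>))))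
              \<in> borel_measurable (PiM I (\<lambda>_. p))" .
      moreover have "\<And>f. dsgd X \<tau> \<sigma> (\<lambda>i. \<phi> (f i)) k = closest_point X (dsgd X \<tau> \<sigma> (\<lambda>i. \<phi> (f i)) m - (\<sigma> / sqrt (real (m - \<tau>))) *\<^sub>R grad (\<phi> (f (m - \<tau>))) (dsgd X \<tau> \<sigma> (\<lambda>i. \<phi> (f i)) (m - \<tau>)))"
        using Suc False by (simp only: dsgd.simps if_False)
      ultimately show ?thesis by simp
    qed
  qed
qed

lemma proj_step:
  fixes X :: "(real ^ 'n) set"
  assumes cX: "closed X" "convex X" "X \<noteq> {}" and xs: "xs \<in> X" and eta: "\<eta> > 0"
  shows "g \<bullet> (y - xs) \<le> ((norm (y - xs))\<^sup>2 - (norm (closest_point X (y - \<eta> *\<^sub>R g) - xs))\<^sup>2) / (2 * \<eta>)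
           + \<eta> * (norm g)\<^sup>2 / 2"
proof -
  have "dist (closest_point X (y - \<eta> *\<^sub>R g)) (closest_point X xs) \<le> dist (y - \<eta> *\<^sub>R g) xs"
    by (rule closest_point_lipschitz[OF cX(2) cX(1) cX(3)])
  then have n: "norm (closest_point X (y - \<eta> *\<^sub>R g) - xs) \<le> norm ((y - xs) - \<eta> *\<^sub>R g)"
    using closest_point_self[OF xs] by (simp add: dist_norm algebra_simps)
  have "(norm (closest_point X (y - \<eta> *\<^sub>R g) - xs))\<^sup>2 \<le> (norm ((y - xs) - \<eta> *\<^sub>R g))\<^sup>2"
    using n by (simp add: power_mono)
  also have "\<dots> = (norm (y - xs))\<^sup>2 - 2 * \<eta> * (g \<bullet> (y - xs)) + \<eta>\<^sup>2 * (norm g)\<^sup>2"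
    unfolding power2_norm_eq_inner by (simp add: inner_diff_left inner_diff_right inner_commute algebra_simps power2_eq_square)
  finally have "2 * \<eta> * (g \<bullet> (y - xs)) \<le> (norm (y - xs))\<^sup>2 - (norm (closest_point X (y - \<eta> *\<^sub>R g) - xs))\<^sup>2 + \<eta>\<^sup>2 * (norm g)\<^sup>2"
    by linarith
  then show ?thesis using eta by (simp add: field_simps power2_eq_square)
qed

lemma sqrt_step: "sqrt (real T) + 1 / (2 * sqrt (real T + 1)) \<le> sqrt (real T + 1)"
proof -
  have "sqrt (real T) * sqrt (real T + 1) \<le> real T + 1/2"
  proof -
    have "sqrt (real T) * sqrt (real T + 1) = sqrt (real T * (real T + 1))" by (simp add: real_sqrt_mult)
    also have "\<dots> \<le> sqrt ((real T + 1/2)\<^sup>2)"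
      by (rule real_sqrt_le_mono) (simp add: power2_eq_square algebra_simps)
    also have "\<dots> = real T + 1/2" by simp
    finally show ?thesis .
  qed
  moreover have "sqrt (real T + 1) > 0" by simp
  moreover have "sqrt (real T + 1) * sqrt (real T + 1) = real T + 1" by simp
  ultimately show ?thesis by (simp add: field_simps)
qed

lemma ogd_bound:
  fixes X :: "(real ^ 'n) set" and y g :: "nat \<Rightarrow> real ^ 'n"
  assumes cX: "closed X" "convex X" "X \<noteq> {}" and xs: "xs \<in> X"
    and F: "F > 0" and L: "L > 0"
    and diam: "\<forall>a\<in>X. \<forall>b\<in>X. (norm (a - b))\<^sup>2 \<le> 2 * F\<^sup>2"
    and yX: "\<And>t. t \<ge> 1 \<Longrightarrow> y t \<in> X"
    and upd: "\<And>t. t \<ge> 1 \<Longrightarrow> y (Suc t) = closest_point X (y t - (F / L / sqrt (real t)) *\<^sub>R g t)"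
    and gb: "\<And>t. 1 \<le> t \<Longrightarrow> t \<le> T \<Longrightarrow> norm (g t) \<le> L"
  shows "(\<Sum>t = 1..T. g t \<bullet> (y t - xs)) \<le> 2 * F * L * sqrt (real T)"
proof -
  define \<sigma> where "\<sigma> = F / L"
  have \<sigma>: "\<sigma> > 0" using F L by (simp add: \<sigma>_def)
  define d where "d t = (norm (y t - xs))\<^sup>2" for t
  have inv: "(\<Sum>t = 1..T'. g t \<bullet> (y t - xs)) \<le> (2 * F\<^sup>2 - d (Suc T')) * sqrt (real T') / (2 * \<sigma>) + \<sigma> * L\<^sup>2 * sqrt (real T')"
    if "T' \<le> T" for T'
    using that
  proof (induction T')
    case 0 then show ?case by simp
  next
    case (Suc n)
    have IH: "(\<Sum>t = 1..n. g t \<bullet> (y t - xs)) \<le> (2 * F\<^sup>2 - d (Suc n)) * sqrt (real n) / (2 * \<sigma>) + \<sigma> * L\<^sup>2 * sqrt (real n)"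
      using Suc by simp
    define \<eta> where "\<eta> = \<sigma> / sqrt (real (Suc n))"
    have \<eta>: "\<eta> > 0" using \<sigma> by (simp add: \<eta>_def)
    have ys: "y (Suc (Suc n)) = closest_point X (y (Suc n) - \<eta> *\<^sub>R g (Suc n))"
      using upd[of "Suc n"] by (simp add: \<eta>_def \<sigma>_def)
    have step: "g (Suc n) \<bullet> (y (Suc n) - xs) \<le> (d (Suc n) - d (Suc (Suc n))) / (2 * \<eta>) + \<eta> * L\<^sup>2 / 2"
    proof -
      have "g (Suc n) \<bullet> (y (Suc n) - xs) \<le> (d (Suc n) - d (Suc (Suc n))) / (2 * \<eta>) + \<eta> * (norm (g (Suc n)))\<^sup>2 / 2"
        using proj_step[OF cX xs \<eta>, of "g (Suc n)" "y (Suc n)"] ys by (simp add: d_def)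
      moreover have "(norm (g (Suc n)))\<^sup>2 \<le> L\<^sup>2" using gb[of "Suc n"] Suc.prems by (simp add: power_mono)
      ultimately show ?thesis using \<eta> by (smt (verit) mult_left_mono divide_right_mono)
    qed
    have dle: "d (Suc n) \<le> 2 * F\<^sup>2" "d (Suc (Suc n)) \<ge> 0"
      using diam yX[of "Suc n"] xs by (auto simp: d_def)
    have s1: "(2 * F\<^sup>2 - d (Suc n)) * sqrt (real n) + (d (Suc n) - d (Suc (Suc n))) * sqrt (real (Suc n))
              \<le> (2 * F\<^sup>2 - d (Suc (Suc n))) * sqrt (real (Suc n))"
    proof -
      have "sqrt (real n) \<le> sqrt (real (Suc n))" by simp
      then have "(2 * F\<^sup>2 - d (Suc n)) * sqrt (real n) \<le> (2 * F\<^sup>2 - d (Suc n)) * sqrt (real (Suc n))"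
        using dle by (intro mult_left_mono) auto
      then show ?thesis by (simp add: algebra_simps)
    qed
    have s2: "sqrt (real n) + 1 / (2 * sqrt (real (Suc n))) \<le> sqrt (real (Suc n))"
      using sqrt_step[of n] by (simp add: add.commute)
    have e1: "(d (Suc n) - d (Suc (Suc n))) / (2 * \<eta>) = (d (Suc n) - d (Suc (Suc n))) * sqrt (real (Suc n)) / (2 * \<sigma>)"
      using \<sigma> by (simp add: \<eta>_def)
    have e2: "\<eta> * L\<^sup>2 / 2 = \<sigma> * L\<^sup>2 * (1 / (2 * sqrt (real (Suc n))))"
      by (simp add: \<eta>_def)
    have "(\<Sum>t = 1..Suc n. g t \<bullet> (y t - xs)) = (\<Sum>t = 1..n. g t \<bullet> (y t - xs)) + g (Suc n) \<bullet> (y (Suc n) - xs)"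
      by simp
    also have "\<dots> \<le> ((2 * F\<^sup>2 - d (Suc n)) * sqrt (real n) + (d (Suc n) - d (Suc (Suc n))) * sqrt (real (Suc n))) / (2 * \<sigma>)
                   + \<sigma> * L\<^sup>2 * (sqrt (real n) + 1 / (2 * sqrt (real (Suc n))))"
      using IH step e1 e2 by (simp add: add_divide_distrib distrib_left)
    also have "\<dots> \<le> (2 * F\<^sup>2 - d (Suc (Suc n))) * sqrt (real (Suc n)) / (2 * \<sigma>) + \<sigma> * L\<^sup>2 * sqrt (real (Suc n))"
    proof (rule add_mono)
      show "((2 * F\<^sup>2 - d (Suc n)) * sqrt (real n) + (d (Suc n) - d (Suc (Suc n))) * sqrt (real (Suc n))) / (2 * \<sigma>)
            \<le> (2 * F\<^sup>2 - d (Suc (Suc n))) * sqrt (real (Suc n)) / (2 * \<sigma>)"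
        using s1 \<sigma> by (intro divide_right_mono) auto
      show "\<sigma> * L\<^sup>2 * (sqrt (real n) + 1 / (2 * sqrt (real (Suc n)))) \<le> \<sigma> * L\<^sup>2 * sqrt (real (Suc n))"
        using s2 \<sigma> by (intro mult_left_mono) auto
    qed
    finally show ?case .
  qed
  have "(\<Sum>t = 1..T. g t \<bullet> (y t - xs)) \<le> (2 * F\<^sup>2 - d (Suc T)) * sqrt (real T) / (2 * \<sigma>) + \<sigma> * L\<^sup>2 * sqrt (real T)"
    using inv by simp
  also have "\<dots> \<le> 2 * F\<^sup>2 * sqrt (real T) / (2 * \<sigma>) + \<sigma> * L\<^sup>2 * sqrt (real T)"
    using \<sigma> by (intro add_mono divide_right_mono mult_right_mono) (auto simp: d_def)
  also have "\<dots> = 2 * F * L * sqrt (real T)"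
    using F L by (simp add: \<sigma>_def power2_eq_square field_simps)
  finally show ?thesis .
qed

lemma harm_shift:
  assumes "k \<le> \<tau>"
  shows "(\<Sum>t = 1..T. (if t + k \<le> \<tau> then 0 else 1 / real (t + k - \<tau>))) = (harm (T + k - \<tau>) :: real)"
proof (induction T)
  case 0 then show ?case using assms by (simp add: harm_def)
next
  case (Suc T)
  show ?case
  proof (cases "Suc T + k \<le> \<tau>")
    case True
    then have "Suc T + k - \<tau> = 0" "T + k - \<tau> = 0" by auto
    then show ?thesis using Suc True by simp
  next
    case False
    then have "Suc T + k - \<tau> = Suc (T + k - \<tau>)" by auto
    then show ?thesis using Suc False by (simp add: harm_Suc divide_inverse)
  qed
qed

lemma harm_le_ln: "harm (T - 1) \<le> 1 + ln (real T)"
proof (cases T)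
  case 0 then show ?thesis by (simp add: harm_def)
next
  case (Suc n)
  have "harm (Suc n) - ln (real (Suc n)) \<le> harm (Suc 0) - ln (real (Suc 0))"
    using decseq_harm_diff_ln unfolding decseq_def by blast
  then have "harm (Suc n) \<le> 1 + ln (real (Suc n))" by (simp add: harm_def)
  moreover have "harm n \<le> (harm (Suc n) :: real)" by (rule harm_mono) simp
  ultimately show ?thesis using Suc by simp
qed

lemma chain_bound:
  fixes x :: "nat \<Rightarrow> real ^ 'n"
  assumes "\<And>k. t \<le> k \<Longrightarrow> k < t + j \<Longrightarrow> norm (x (Suc k) - x k) \<le> \<delta> k"
  shows "norm (x t - x (t + j)) \<le> (\<Sum>k<j. \<delta> (t + k))"
  using assms
proof (induction j)
  case 0 then show ?case by simp
next
  case (Suc j)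
  have "norm (x t - x (t + Suc j)) \<le> norm (x t - x (t + j)) + norm (x (Suc (t + j)) - x (t + j))"
    using norm_triangle_ineq[of "x t - x (t + j)" "x (t + j) - x (Suc (t + j))"]
    by (simp add: norm_minus_commute)
  also have "\<dots> \<le> (\<Sum>k<j. \<delta> (t + k)) + \<delta> (t + j)"
    using Suc by (intro add_mono) auto
  finally show ?case by simp
qed

lemma delay_bound:
  fixes x :: "nat \<Rightarrow> real ^ 'n"
  assumes F: "F > 0"
    and step: "\<And>k. k < T + \<tau> \<Longrightarrow> norm (x (Suc k) - x k) \<le> (if k \<le> \<tau> then 0 else F / sqrt (real (k - \<tau>)))"
  shows "(\<Sum>t = 1..T. (norm (x t - x (t + \<tau>)))\<^sup>2) \<le> (real \<tau>)\<^sup>2 * F\<^sup>2 * (1 + ln (real T))"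
proof -
  define \<delta> where "\<delta> k = (if k \<le> \<tau> then 0 else F / sqrt (real (k - \<tau>)))" for k
  define e where "e k = (if k \<le> \<tau> then 0 else 1 / real (k - \<tau>))" for k
  have \<delta>e: "(\<delta> k)\<^sup>2 = F\<^sup>2 * e k" for k
    by (simp add: \<delta>_def e_def power_divide)
  have pt: "(norm (x t - x (t + \<tau>)))\<^sup>2 \<le> real \<tau> * F\<^sup>2 * (\<Sum>k<\<tau>. e (t + k))" if "t \<in> {1..T}" for t
  proof -
    have "norm (x t - x (t + \<tau>)) \<le> (\<Sum>k<\<tau>. \<delta> (t + k))"
      using that step unfolding \<delta>_def by (intro chain_bound) auto
    moreover have "0 \<le> norm (x t - x (t + \<tau>))" by simp
    ultimately have "(norm (x t - x (t + \<tau>)))\<^sup>2 \<le> (\<Sum>k<\<tau>. \<delta> (t + k))\<^sup>2"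
      by (rule power_mono)
    also have "\<dots> \<le> (\<Sum>k<\<tau>. (\<delta> (t + k))\<^sup>2) * card {..<\<tau>}"
      by (rule sum_squared_le_sum_of_squares)
    also have "\<dots> = real \<tau> * F\<^sup>2 * (\<Sum>k<\<tau>. e (t + k))"
      by (simp add: \<delta>e sum_distrib_left sum_distrib_right mult_ac)
    finally show ?thesis .
  qed
  have "(\<Sum>t = 1..T. (norm (x t - x (t + \<tau>)))\<^sup>2) \<le> (\<Sum>t = 1..T. real \<tau> * F\<^sup>2 * (\<Sum>k<\<tau>. e (t + k)))"
    using pt by (rule sum_mono)
  also have "\<dots> = real \<tau> * F\<^sup>2 * (\<Sum>k<\<tau>. \<Sum>t = 1..T. e (t + k))"
    by (simp add: sum_distrib_left) (rule sum.swap)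
  also have "\<dots> \<le> real \<tau> * F\<^sup>2 * (\<Sum>k<\<tau>. harm (T - 1))"
  proof (intro mult_left_mono sum_mono)
    fix k assume k: "k \<in> {..<\<tau>}"
    have "(\<Sum>t = 1..T. e (t + k)) = harm (T + k - \<tau>)"
      unfolding e_def using harm_shift[of k \<tau> T] k by simp
    also have "\<dots> \<le> harm (T - 1)" using k by (intro harm_mono) auto
    finally show "(\<Sum>t = 1..T. e (t + k)) \<le> harm (T - 1)" .
  qed simp
  also have "\<dots> = (real \<tau>)\<^sup>2 * F\<^sup>2 * harm (T - 1)" by (simp add: power2_eq_square)
  also have "\<dots> \<le> (real \<tau>)\<^sup>2 * F\<^sup>2 * (1 + ln (real T))"
    by (intro mult_left_mono harm_le_ln) simp
  finally show ?thesis .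
qed

lemma telescope_shift:
  fixes a :: "nat \<Rightarrow> real"
  shows "(\<Sum>t = 1..T. a t - a (t + \<tau>)) = (\<Sum>k<\<tau>. a (1 + k) - a (T + 1 + k))"
proof (induction T)
  case 0 then show ?case by simp
next
  case (Suc T)
  have tel: "(\<Sum>k<\<tau>. a (T + 1 + k) - a (T + 2 + k)) = a (T + 1) - a (T + 1 + \<tau>)"
    using sum_lessThan_telescope'[of "\<lambda>k. a (T + 1 + k)" \<tau>] by simp
  have "(\<Sum>k<\<tau>. a (1 + k) - a (Suc T + 1 + k)) = (\<Sum>k<\<tau>. a (1 + k) - a (T + 1 + k)) + (\<Sum>k<\<tau>. a (T + 1 + k) - a (T + 2 + k))"
    by (simp add: sum.distrib[symmetric])
  then show ?case using Suc tel by simp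
qed

lemma grad_ineq:
  fixes f :: "real ^ 'n \<Rightarrow> real"
  assumes cv: "convex_on UNIV f" and d: "\<And>y. f differentiable at y"
    and sm: "\<forall>a b. norm (grad f a - grad f b) \<le> H * norm (a - b)"
  shows "f y - f xs \<le> grad f x \<bullet> (y - xs) + H * (norm (x - y))\<^sup>2"
proof -
  have g1: "f x + (xs - x) \<bullet> grad f x \<le> f xs"
    by (rule convex_tangent[OF cv grad_exists[OF d]])
  have g2: "f y + (x - y) \<bullet> grad f y \<le> f x"
    by (rule convex_tangent[OF cv grad_exists[OF d]])
  have "(x - y) \<bullet> (grad f x - grad f y) \<le> norm (x - y) * norm (grad f x - grad f y)"
    by (rule norm_cauchy_schwarz)
  also have "\<dots> \<le> norm (x - y) * (H * norm (x - y))"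
    using sm by (intro mult_left_mono) auto
  finally have cs: "(x - y) \<bullet> (grad f x - grad f y) \<le> H * (norm (x - y))\<^sup>2"
    by (simp add: power2_eq_square mult_ac)
  have "f y - f xs \<le> (x - xs) \<bullet> grad f x - (x - y) \<bullet> grad f y" using g1 g2 by (simp add: inner_diff_left)
  also have "\<dots> = grad f x \<bullet> (y - xs) + (x - y) \<bullet> (grad f x - grad f y)"
    by (simp add: inner_diff_left inner_diff_right inner_commute)
  finally show ?thesis using cs by linarith
qed

lemma lip0:
  fixes f :: "real ^ 'n \<Rightarrow> real"
  assumes cv: "convex_on UNIV f" and d: "\<And>y. f differentiable at y"
    and gb: "norm (grad f 0) \<le> L" and xn: "norm x \<le> R" and L: "L \<ge> 0"
  shows "f 0 - f x \<le> L * R"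
proof -
  have "f 0 + (x - 0) \<bullet> grad f 0 \<le> f x"
    by (rule convex_tangent[OF cv grad_exists[OF d]])
  then have "f 0 - f x \<le> - (x \<bullet> grad f 0)" by simp
  also have "\<dots> \<le> norm x * norm (grad f 0)"
    using norm_cauchy_schwarz[of "-x" "grad f 0"] by simp
  also have "\<dots> \<le> R * L" proof (rule mult_mono)
    show "0 \<le> R" using xn norm_ge_zero[of x] by linarith
  qed (use gb xn in auto)
  finally show ?thesis by (simp add: mult.commute)
qed

lemma pathwise:
  fixes X :: "(real ^ 'n) set" and f :: "nat \<Rightarrow> real ^ 'n \<Rightarrow> real" and xs :: "real ^ 'n"
  assumes cX: "closed X" "convex X" "X \<noteq> {}" and X0: "0 \<in> X" and xs: "xs \<in> X"
    and F: "F > 0" and L: "L > 0" and H: "H \<ge> 0"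
    and diam: "\<forall>a\<in>X. \<forall>b\<in>X. (1/2) * (norm (a - b))\<^sup>2 \<le> F\<^sup>2"
    and cv: "\<And>t. 1 \<le> t \<Longrightarrow> t \<le> T + \<tau> \<Longrightarrow> convex_on UNIV (f t)"
    and df: "\<And>t y. 1 \<le> t \<Longrightarrow> t \<le> T + \<tau> \<Longrightarrow> f t differentiable at y"
    and gb: "\<And>t. 1 \<le> t \<Longrightarrow> t \<le> T + \<tau> \<Longrightarrow> \<forall>y\<in>X. norm (grad (f t) y) \<le> L"
    and sm: "\<And>t. 1 \<le> t \<Longrightarrow> t \<le> T \<Longrightarrow> \<forall>a b. norm (grad (f t) a - grad (f t) b) \<le> H * norm (a - b)"
  shows "(\<Sum>t = 1..T. f t (dsgd X \<tau> (F / L) f t) - f t xs)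
      \<le> 2 * F * L * sqrt (real T) + H * ((real \<tau>)\<^sup>2 * F\<^sup>2 * (1 + ln (real T))) + real \<tau> * (L * (sqrt 2 * F))
         + (\<Sum>t = 1..T. f (t + \<tau>) (dsgd X \<tau> (F / L) f (t + \<tau>)) - f t (dsgd X \<tau> (F / L) f (t + \<tau>)))
         + (\<Sum>k<\<tau>. f (1 + k) 0 - f (T + 1 + k) 0)"
proof -
  define x where "x = dsgd X \<tau> (F / L) f"
  define g where "g t = grad (f t) (x t)" for t
  have xX: "x k \<in> X" for k
    by (cases k) (auto simp: x_def X0 closest_point_in_set[OF cX(1) cX(3)])
  have x0: "x k = 0" if "k \<le> \<tau>" for k
    using that by (cases k) (auto simp: x_def)
  have upd: "x (Suc k) = closest_point X (x k - (F / L / sqrt (real (k - \<tau>))) *\<^sub>R g (k - \<tau>))" if "\<tau> < k" for k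
    using that by (simp add: x_def g_def)
  have diam2: "(norm (a - b))\<^sup>2 \<le> 2 * F\<^sup>2" if "a \<in> X" "b \<in> X" for a b
    using diam that by fastforce
  have normx: "norm (x k) \<le> sqrt 2 * F" for k
  proof -
    have "(norm (x k))\<^sup>2 \<le> 2 * F\<^sup>2" using diam2[OF xX[of k] X0] by simp
    then have "norm (x k) \<le> sqrt (2 * F\<^sup>2)" by (simp add: real_le_rsqrt)
    also have "\<dots> = sqrt 2 * F" using F by (simp add: real_sqrt_mult)
    finally show ?thesis .
  qed
  have ogd: "(\<Sum>t = 1..T. g t \<bullet> (x (t + \<tau>) - xs)) \<le> 2 * F * L * sqrt (real T)"
  proof (rule ogd_bound[OF cX xs F L, where y="\<lambda>t. x (t + \<tau>)"])
    show "\<forall>a\<in>X. \<forall>b\<in>X. (norm (a - b))\<^sup>2 \<le> 2 * F\<^sup>2" using diam2 by blast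
    show "x (t + \<tau>) \<in> X" for t by (rule xX)
    show "x (Suc t + \<tau>) = closest_point X (x (t + \<tau>) - (F / L / sqrt (real t)) *\<^sub>R g t)" if "1 \<le> t" for t
      using upd[of "t + \<tau>"] that by simp
    show "norm (g t) \<le> L" if "1 \<le> t" "t \<le> T" for t
      using gb[of t] that xX[of t] by (auto simp: g_def)
  qed
  have del: "(\<Sum>t = 1..T. (norm (x t - x (t + \<tau>)))\<^sup>2) \<le> (real \<tau>)\<^sup>2 * F\<^sup>2 * (1 + ln (real T))"
  proof (rule delay_bound[OF F])
    fix k assume k: "k < T + \<tau>"
    show "norm (x (Suc k) - x k) \<le> (if k \<le> \<tau> then 0 else F / sqrt (real (k - \<tau>)))"
    proof (cases "k \<le> \<tau>")
      case True then show ?thesis using x0[of k] x0[of "Suc k"] by (simp add: x_def)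
    next
      case False
      have "norm (x (Suc k) - x k) = dist (closest_point X (x k - (F / L / sqrt (real (k - \<tau>))) *\<^sub>R g (k - \<tau>))) (closest_point X (x k))"
        using upd[of k] False closest_point_self[OF xX[of k]] by (simp add: dist_norm)
      also have "\<dots> \<le> dist (x k - (F / L / sqrt (real (k - \<tau>))) *\<^sub>R g (k - \<tau>)) (x k)"
        by (rule closest_point_lipschitz[OF cX(2) cX(1) cX(3)])
      also have "\<dots> = F / L / sqrt (real (k - \<tau>)) * norm (g (k - \<tau>))"
        using F L by (simp add: dist_norm)
      also have "\<dots> \<le> F / L / sqrt (real (k - \<tau>)) * L"
        using gb[of "k - \<tau>"] False k xX[of "k - \<tau>"] F L by (intro mult_left_mono) (auto simp: g_def)
      also have "\<dots> = F / sqrt (real (k - \<tau>))" using L by simp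
      finally show ?thesis using False by simp
    qed
  qed
  have per: "f t (x (t + \<tau>)) - f t xs \<le> g t \<bullet> (x (t + \<tau>) - xs) + H * (norm (x t - x (t + \<tau>)))\<^sup>2"
    if "t \<in> {1..T}" for t
    unfolding g_def
    by (rule grad_ineq) (use that cv df sm in auto)
  have A: "(\<Sum>t = 1..T. f t (x (t + \<tau>)) - f t xs) \<le> 2 * F * L * sqrt (real T) + H * ((real \<tau>)\<^sup>2 * F\<^sup>2 * (1 + ln (real T)))"
  proof -
    have "(\<Sum>t = 1..T. f t (x (t + \<tau>)) - f t xs) \<le> (\<Sum>t = 1..T. g t \<bullet> (x (t + \<tau>) - xs) + H * (norm (x t - x (t + \<tau>)))\<^sup>2)"
      using per by (rule sum_mono)
    also have "\<dots> = (\<Sum>t = 1..T. g t \<bullet> (x (t + \<tau>) - xs)) + H * (\<Sum>t = 1..T. (norm (x t - x (t + \<tau>)))\<^sup>2)"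
      by (simp add: sum.distrib sum_distrib_left)
    also have "\<dots> \<le> 2 * F * L * sqrt (real T) + H * ((real \<tau>)\<^sup>2 * F\<^sup>2 * (1 + ln (real T)))"
    proof (rule add_mono[OF ogd])
      show "H * (\<Sum>t = 1..T. (norm (x t - x (t + \<tau>)))\<^sup>2) \<le> H * ((real \<tau>)\<^sup>2 * F\<^sup>2 * (1 + ln (real T)))"
        using del H by (rule mult_left_mono)
    qed
    finally show ?thesis .
  qed
  have B: "(\<Sum>k<\<tau>. f (T + 1 + k) 0 - f (T + 1 + k) (x (T + 1 + k))) \<le> real \<tau> * (L * (sqrt 2 * F))"
  proof -
    have "(\<Sum>k<\<tau>. f (T + 1 + k) 0 - f (T + 1 + k) (x (T + 1 + k))) \<le> (\<Sum>k<\<tau>. L * (sqrt 2 * F))"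
    proof (rule sum_mono)
      fix k assume k: "k \<in> {..<\<tau>}"
      show "f (T + 1 + k) 0 - f (T + 1 + k) (x (T + 1 + k)) \<le> L * (sqrt 2 * F)"
        using k cv[of "T + 1 + k"] df[of "T + 1 + k"] gb[of "T + 1 + k"] X0 normx L
        by (intro lip0) auto
    qed
    then show ?thesis by simp
  qed
  have tel: "(\<Sum>t = 1..T. f t (x t) - f (t + \<tau>) (x (t + \<tau>)))
      = (\<Sum>k<\<tau>. f (1 + k) 0 - f (T + 1 + k) 0) + (\<Sum>k<\<tau>. f (T + 1 + k) 0 - f (T + 1 + k) (x (T + 1 + k)))"
  proof -
    have "(\<Sum>t = 1..T. f t (x t) - f (t + \<tau>) (x (t + \<tau>))) = (\<Sum>k<\<tau>. f (1 + k) (x (1 + k)) - f (T + 1 + k) (x (T + 1 + k)))"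
      by (rule telescope_shift[of "\<lambda>t. f t (x t)"])
    also have "\<dots> = (\<Sum>k<\<tau>. (f (1 + k) 0 - f (T + 1 + k) 0) + (f (T + 1 + k) 0 - f (T + 1 + k) (x (T + 1 + k))))"
      by (intro sum.cong refl) (simp add: x0)
    also have "\<dots> = (\<Sum>k<\<tau>. f (1 + k) 0 - f (T + 1 + k) 0) + (\<Sum>k<\<tau>. f (T + 1 + k) 0 - f (T + 1 + k) (x (T + 1 + k)))"
      by (rule sum.distrib)
    finally show ?thesis .
  qed
  have "(\<Sum>t = 1..T. f t (x t) - f t xs)
      = (\<Sum>t = 1..T. f t (x (t + \<tau>)) - f t xs) + (\<Sum>t = 1..T. f t (x t) - f (t + \<tau>) (x (t + \<tau>)))
        + (\<Sum>t = 1..T. f (t + \<tau>) (x (t + \<tau>)) - f t (x (t + \<tau>)))"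
    by (simp add: sum.distrib[symmetric])
  also have "\<dots> \<le> 2 * F * L * sqrt (real T) + H * ((real \<tau>)\<^sup>2 * F\<^sup>2 * (1 + ln (real T))) + real \<tau> * (L * (sqrt 2 * F))
         + (\<Sum>t = 1..T. f (t + \<tau>) (x (t + \<tau>)) - f t (x (t + \<tau>)))
         + (\<Sum>k<\<tau>. f (1 + k) 0 - f (T + 1 + k) 0)"
    using A B tel by linarith
  finally show ?thesis by (simp add: x_def)
qed

lemma (in prob_space) pair_law:
  assumes ind: "indep_vars (\<lambda>_. p) \<xi> ({1..} :: nat set)" and j: "t \<le> j" "1 \<le> j"
    and dj: "distr M p (\<xi> j) = p"
  shows "distr M (PiM {1..<t} (\<lambda>_. p) \<Otimes>\<^sub>M PiM {0::nat} (\<lambda>_. p)) (\<lambda>\<omega>. (restrict (\<lambda>i. \<xi> i \<omega>) {1..<t}, restrict (\<lambda>_. \<xi> j \<omega>) {0::nat}))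
       = distr M (PiM {1..<t} (\<lambda>_. p)) (\<lambda>\<omega>. restrict (\<lambda>i. \<xi> i \<omega>) {1..<t}) \<Otimes>\<^sub>M distr p (PiM {0::nat} (\<lambda>_. p)) (\<lambda>s. restrict (\<lambda>_. s) {0::nat})"
proof -
  have iv: "indep_var (PiM {1..<t} (\<lambda>_. p)) (\<lambda>\<omega>. restrict (\<lambda>i. \<xi> i \<omega>) {1..<t}) (PiM {j} (\<lambda>_. p)) (\<lambda>\<omega>. restrict (\<lambda>i. \<xi> i \<omega>) {j})"
    using j by (intro indep_var_restrict[OF ind]) auto
  have m2: "(\<lambda>f. restrict (\<lambda>_. f j) {0::nat}) \<in> measurable (PiM {j} (\<lambda>_. p)) (PiM {0::nat} (\<lambda>_. p))"
    by measurable
  have "indep_var (PiM {1..<t} (\<lambda>_. p)) (id \<circ> (\<lambda>\<omega>. restrict (\<lambda>i. \<xi> i \<omega>) {1..<t})) (PiM {0::nat} (\<lambda>_. p)) ((\<lambda>f. restrict (\<lambda>_. f j) {0::nat}) \<circ> (\<lambda>\<omega>. restrict (\<lambda>i. \<xi> i \<omega>) {j}))"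
    by (rule indep_var_compose[OF iv measurable_ident m2])
  then have "indep_var (PiM {1..<t} (\<lambda>_. p)) (\<lambda>\<omega>. restrict (\<lambda>i. \<xi> i \<omega>) {1..<t}) (PiM {0::nat} (\<lambda>_. p)) (\<lambda>\<omega>. restrict (\<lambda>_. \<xi> j \<omega>) {0::nat})"
    by (simp add: o_def)
  then have eq: "distr M (PiM {1..<t} (\<lambda>_. p) \<Otimes>\<^sub>M PiM {0::nat} (\<lambda>_. p)) (\<lambda>\<omega>. (restrict (\<lambda>i. \<xi> i \<omega>) {1..<t}, restrict (\<lambda>_. \<xi> j \<omega>) {0::nat}))
       = distr M (PiM {1..<t} (\<lambda>_. p)) (\<lambda>\<omega>. restrict (\<lambda>i. \<xi> i \<omega>) {1..<t}) \<Otimes>\<^sub>M distr M (PiM {0::nat} (\<lambda>_. p)) (\<lambda>\<omega>. restrict (\<lambda>_. \<xi> j \<omega>) {0::nat})"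
    unfolding indep_var_distribution_eq by (elim conjE) (erule sym)
  have rvj: "\<xi> j \<in> measurable M p"
    using ind j unfolding indep_vars_def by auto
  have "distr M (PiM {0::nat} (\<lambda>_. p)) (\<lambda>\<omega>. restrict (\<lambda>_. \<xi> j \<omega>) {0::nat}) = distr (distr M p (\<xi> j)) (PiM {0::nat} (\<lambda>_. p)) (\<lambda>s. restrict (\<lambda>_. s) {0::nat})"
    by (subst distr_distr) (use rvj in \<open>auto simp: o_def\<close>)
  with dj eq show ?thesis by simp
qed

lemma (in prob_space) shift_integral:
  fixes \<phi> :: "'s \<Rightarrow> real ^ 'n \<Rightarrow> real" and X :: "(real ^ 'n) set"
  assumes ind: "indep_vars (\<lambda>_. p) \<xi> ({1..} :: nat set)"
    and dist: "\<forall>t\<ge>1. distr M p (\<xi> t) = p"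
    and meas: "\<forall>x. (\<lambda>s. \<phi> s x) \<in> borel_measurable p"
    and diff: "\<forall>s\<in>space p. \<forall>x. \<phi> s differentiable at x"
    and cX: "closed X" "convex X" "X \<noteq> {}"
    and j: "t \<le> j" "1 \<le> j"
  shows "(\<integral>\<omega>. \<phi> (\<xi> j \<omega>) (dsgd X \<tau> \<sigma> (\<lambda>i. \<phi> (\<xi> i \<omega>)) (t + \<tau>)) \<partial>M)
       = (\<integral>z. \<phi> (snd z 0) (dsgd X \<tau> \<sigma> (\<lambda>i. \<phi> (fst z i)) (t + \<tau>))
            \<partial>(distr M (PiM {1..<t} (\<lambda>_. p)) (\<lambda>\<omega>. restrict (\<lambda>i. \<xi> i \<omega>) {1..<t}) \<Otimes>\<^sub>M distr p (PiM {0::nat} (\<lambda>_. p)) (\<lambda>s. restrict (\<lambda>_. s) {0::nat})))"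
proof -
  have rv: "\<xi> i \<in> measurable M p" if "1 \<le> i" for i
    using ind that unfolding indep_vars_def by auto
  have \<Phi>: "(\<lambda>z. \<phi> (fst z) (snd z)) \<in> borel_measurable (p \<Otimes>\<^sub>M borel)"
  proof (rule caratheodory_measurable)
    show "(\<lambda>s. \<phi> s x) \<in> borel_measurable p" for x using meas by blast
    fix s x assume "s \<in> space p"
    then have "\<phi> s differentiable at x" using diff by blast
    then show "isCont (\<phi> s) x" by (rule differentiable_imp_continuous_within)
  qed
  have \<Gamma>: "(\<lambda>z. grad (\<phi> (fst z)) (snd z)) \<in> borel_measurable (p \<Otimes>\<^sub>M borel)"
    using meas diff by (intro grad_measurable) auto
  have G: "(\<lambda>f. dsgd X \<tau> \<sigma> (\<lambda>i. \<phi> (f i)) (t + \<tau>)) \<in> borel_measurable (PiM {1..<t} (\<lambda>_. p))"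
    by (rule dsgd_measurable[OF cX \<Gamma>]) simp
  define Pt where "Pt = PiM {1..<t} (\<lambda>_. p)"
  define P0 where "P0 = PiM {0::nat} (\<lambda>_. p)"
  define g where "g \<omega> = (restrict (\<lambda>i. \<xi> i \<omega>) {1..<t}, restrict (\<lambda>_. \<xi> j \<omega>) {0::nat})" for \<omega>
  define h where "h z = \<phi> (snd z 0) (dsgd X \<tau> \<sigma> (\<lambda>i. \<phi> (fst z i)) (t + \<tau>))" for z :: "(nat \<Rightarrow> 's) \<times> (nat \<Rightarrow> 's)"
  have gm: "g \<in> measurable M (Pt \<Otimes>\<^sub>M P0)"
    unfolding g_def Pt_def P0_def
  proof (rule measurable_Pair)
    show "(\<lambda>\<omega>. restrict (\<lambda>i. \<xi> i \<omega>) {1..<t}) \<in> measurable M (PiM {1..<t} (\<lambda>_. p))"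
      by (rule measurable_restrict) (use rv in auto)
    show "(\<lambda>\<omega>. restrict (\<lambda>_. \<xi> j \<omega>) {0::nat}) \<in> measurable M (PiM {0::nat} (\<lambda>_. p))"
      by (rule measurable_restrict) (use rv j in auto)
  qed
  have hm: "h \<in> borel_measurable (Pt \<Otimes>\<^sub>M P0)"
  proof -
    have c1: "(\<lambda>z. snd z 0) \<in> measurable (Pt \<Otimes>\<^sub>M P0) p"
      unfolding P0_def by (rule measurable_compose[OF measurable_snd measurable_component_singleton]) simp
    have c2: "(\<lambda>z. dsgd X \<tau> \<sigma> (\<lambda>i. \<phi> (fst z i)) (t + \<tau>)) \<in> borel_measurable (Pt \<Otimes>\<^sub>M P0)"
      unfolding Pt_def using measurable_compose[OF measurable_fst G] by simp
    have "(\<lambda>z. (snd z 0, dsgd X \<tau> \<sigma> (\<lambda>i. \<phi> (fst z i)) (t + \<tau>))) \<in> measurable (Pt \<Otimes>\<^sub>M P0) (p \<Otimes>\<^sub>M borel)"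
      by (rule measurable_Pair[OF c1 c2])
    from measurable_compose[OF this \<Phi>] show ?thesis unfolding h_def[abs_def] by simp
  qed
  have law: "distr M (Pt \<Otimes>\<^sub>M P0) g = distr M Pt (\<lambda>\<omega>. restrict (\<lambda>i. \<xi> i \<omega>) {1..<t}) \<Otimes>\<^sub>M distr p P0 (\<lambda>s. restrict (\<lambda>_. s) {0::nat})"
    unfolding Pt_def P0_def g_def using pair_law[OF ind j] dist j by simp
  have pw: "\<phi> (\<xi> j \<omega>) (dsgd X \<tau> \<sigma> (\<lambda>i. \<phi> (\<xi> i \<omega>)) (t + \<tau>)) = h (g \<omega>)" for \<omega>
  proof -
    have "dsgd X \<tau> \<sigma> (\<lambda>i. \<phi> (restrict (\<lambda>i. \<xi> i \<omega>) {1..<t} i)) (t + \<tau>) = dsgd X \<tau> \<sigma> (\<lambda>i. \<phi> (\<xi> i \<omega>)) (t + \<tau>)"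
      by (rule dsgd_local) auto
    then show ?thesis by (simp add: h_def g_def)
  qed
  have "(\<integral>\<omega>. \<phi> (\<xi> j \<omega>) (dsgd X \<tau> \<sigma> (\<lambda>i. \<phi> (\<xi> i \<omega>)) (t + \<tau>)) \<partial>M) = (\<integral>\<omega>. h (g \<omega>) \<partial>M)"
    by (simp only: pw)
  also have "\<dots> = integral\<^sup>L (distr M (Pt \<Otimes>\<^sub>M P0) g) h"
    by (rule integral_distr[OF gm hm, symmetric])
  also have "\<dots> = integral\<^sup>L (distr M Pt (\<lambda>\<omega>. restrict (\<lambda>i. \<xi> i \<omega>) {1..<t}) \<Otimes>\<^sub>M distr p P0 (\<lambda>s. restrict (\<lambda>_. s) {0::nat})) h"
    by (simp add: law)
  finally show ?thesis by (simp add: h_def[abs_def] Pt_def P0_def)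
qed


lemma (in prob_space) shift_measurable:
  fixes \<phi> :: "'s \<Rightarrow> real ^ 'n \<Rightarrow> real" and X :: "(real ^ 'n) set"
  assumes ind: "indep_vars (\<lambda>_. p) \<xi> ({1..} :: nat set)"
    and dist: "\<forall>t\<ge>1. distr M p (\<xi> t) = p"
    and meas: "\<forall>x. (\<lambda>s. \<phi> s x) \<in> borel_measurable p"
    and diff: "\<forall>s\<in>space p. \<forall>x. \<phi> s differentiable at x"
    and cX: "closed X" "convex X" "X \<noteq> {}"
    and j: "t \<le> j" "1 \<le> j"
  shows "(\<lambda>\<omega>. \<phi> (\<xi> j \<omega>) (dsgd X \<tau> \<sigma> (\<lambda>i. \<phi> (\<xi> i \<omega>)) (t + \<tau>))) \<in> borel_measurable M"
proof -
  have rv: "\<xi> i \<in> measurable M p" if "1 \<le> i" for i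
    using ind that unfolding indep_vars_def by auto
  have \<Phi>: "(\<lambda>z. \<phi> (fst z) (snd z)) \<in> borel_measurable (p \<Otimes>\<^sub>M borel)"
  proof (rule caratheodory_measurable)
    show "(\<lambda>s. \<phi> s x) \<in> borel_measurable p" for x using meas by blast
    fix s x assume "s \<in> space p"
    then have "\<phi> s differentiable at x" using diff by blast
    then show "isCont (\<phi> s) x" by (rule differentiable_imp_continuous_within)
  qed
  have \<Gamma>: "(\<lambda>z. grad (\<phi> (fst z)) (snd z)) \<in> borel_measurable (p \<Otimes>\<^sub>M borel)"
    using meas diff by (intro grad_measurable) auto
  have G: "(\<lambda>f. dsgd X \<tau> \<sigma> (\<lambda>i. \<phi> (f i)) (t + \<tau>)) \<in> borel_measurable (PiM {1..<t} (\<lambda>_. p))"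
    by (rule dsgd_measurable[OF cX \<Gamma>]) simp
  define Pt where "Pt = PiM {1..<t} (\<lambda>_. p)"
  define P0 where "P0 = PiM {0::nat} (\<lambda>_. p)"
  define g where "g \<omega> = (restrict (\<lambda>i. \<xi> i \<omega>) {1..<t}, restrict (\<lambda>_. \<xi> j \<omega>) {0::nat})" for \<omega>
  define h where "h z = \<phi> (snd z 0) (dsgd X \<tau> \<sigma> (\<lambda>i. \<phi> (fst z i)) (t + \<tau>))" for z :: "(nat \<Rightarrow> 's) \<times> (nat \<Rightarrow> 's)"
  have gm: "g \<in> measurable M (Pt \<Otimes>\<^sub>M P0)"
    unfolding g_def Pt_def P0_def
  proof (rule measurable_Pair)
    show "(\<lambda>\<omega>. restrict (\<lambda>i. \<xi> i \<omega>) {1..<t}) \<in> measurable M (PiM {1..<t} (\<lambda>_. p))"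
      by (rule measurable_restrict) (use rv in auto)
    show "(\<lambda>\<omega>. restrict (\<lambda>_. \<xi> j \<omega>) {0::nat}) \<in> measurable M (PiM {0::nat} (\<lambda>_. p))"
      by (rule measurable_restrict) (use rv j in auto)
  qed
  have hm: "h \<in> borel_measurable (Pt \<Otimes>\<^sub>M P0)"
  proof -
    have c1: "(\<lambda>z. snd z 0) \<in> measurable (Pt \<Otimes>\<^sub>M P0) p"
      unfolding P0_def by (rule measurable_compose[OF measurable_snd measurable_component_singleton]) simp
    have c2: "(\<lambda>z. dsgd X \<tau> \<sigma> (\<lambda>i. \<phi> (fst z i)) (t + \<tau>)) \<in> borel_measurable (Pt \<Otimes>\<^sub>M P0)"
      unfolding Pt_def using measurable_compose[OF measurable_fst G] by simp
    have "(\<lambda>z. (snd z 0, dsgd X \<tau> \<sigma> (\<lambda>i. \<phi> (fst z i)) (t + \<tau>))) \<in> measurable (Pt \<Otimes>\<^sub>M P0) (p \<Otimes>\<^sub>M borel)"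
      by (rule measurable_Pair[OF c1 c2])
    from measurable_compose[OF this \<Phi>] show ?thesis unfolding h_def[abs_def] by simp
  qed
  have pw: "\<phi> (\<xi> j \<omega>) (dsgd X \<tau> \<sigma> (\<lambda>i. \<phi> (\<xi> i \<omega>)) (t + \<tau>)) = h (g \<omega>)" for \<omega>
  proof -
    have "dsgd X \<tau> \<sigma> (\<lambda>i. \<phi> (restrict (\<lambda>i. \<xi> i \<omega>) {1..<t} i)) (t + \<tau>) = dsgd X \<tau> \<sigma> (\<lambda>i. \<phi> (\<xi> i \<omega>)) (t + \<tau>)"
      by (rule dsgd_local) auto
    then show ?thesis by (simp add: h_def g_def)
  qed
  have "(\<lambda>\<omega>. h (g \<omega>)) \<in> borel_measurable M" by (rule measurable_compose[OF gm hm])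
  then show ?thesis by (simp only: pw)
qed

lemma abs_bound0:
  fixes f :: "real ^ 'n \<Rightarrow> real"
  assumes cv: "convex_on UNIV f" and d: "\<And>y. f differentiable at y"
    and gb: "\<forall>y\<in>X. norm (grad f y) \<le> L" and x: "x \<in> X" and X0: "0 \<in> X"
    and xn: "norm x \<le> R" and L: "L \<ge> 0"
  shows "\<bar>f x\<bar> \<le> \<bar>f 0\<bar> + L * R"
proof -
  have a: "f 0 - f x \<le> L * R"
    using gb X0 by (intro lip0[OF cv d _ xn L]) auto
  have "f x + (0 - x) \<bullet> grad f x \<le> f 0"
    by (rule convex_tangent[OF cv grad_exists[OF d]])
  then have "f x - f 0 \<le> x \<bullet> grad f x" by simp
  also have "\<dots> \<le> norm x * norm (grad f x)" by (rule norm_cauchy_schwarz)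
  also have "\<dots> \<le> R * L"
  proof (rule mult_mono)
    show "0 \<le> R" using xn norm_ge_zero[of x] by linarith
  qed (use gb x xn in auto)
  finally have b: "f x - f 0 \<le> L * R" by (simp add: mult.commute)
  show ?thesis using a b by linarith
qed

theorem theorem8:
  fixes X :: "(real ^ 'n) set"
    and F L H :: real and \<tau> T :: nat
    and M :: "'w measure" and p :: "'s measure"
    and \<xi> :: "nat \<Rightarrow> 'w \<Rightarrow> 's"
    and \<phi> :: "'s \<Rightarrow> real ^ 'n \<Rightarrow> real"
    and xstar :: "real ^ 'n"
  assumes "closed X" and "convex X" and "X \<noteq> {}" and "0 \<in> X"
    and "F > 0" and "L > 0"
    and diam: "\<forall>x\<in>X. \<forall>x'\<in>X. (1/2) * (norm (x - x'))\<^sup>2 \<le> F\<^sup>2"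
    and "prob_space M"
    and iid_indep: "prob_space.indep_vars M (\<lambda>_. p) \<xi> ({1..} :: nat set)"
    and iid_distr: "\<forall>t\<ge>1. distr M p (\<xi> t) = p"
    and meas: "\<forall>x. (\<lambda>s. \<phi> s x) \<in> borel_measurable p"
    and convex: "\<forall>s\<in>space p. convex_on UNIV (\<phi> s)"
    and diff: "\<forall>s\<in>space p. \<forall>x. \<phi> s differentiable at x"
    and grad_bound: "AE s in p. \<forall>x\<in>X. norm (grad (\<phi> s) x) \<le> L"
    and smooth: "AE s in p. \<forall>x x'. norm (grad (\<phi> s) x - grad (\<phi> s) x') \<le> H * norm (x - x')"
    and "H \<ge> L / (4 * F * sqrt (real \<tau>))"
    and integ: "\<forall>x\<in>X. integrable p (\<lambda>s. \<phi> s x)"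
    and xstar: "xstar \<in> X" "\<forall>x\<in>X. (\<integral>s. \<phi> s xstar \<partial>p) \<le> (\<integral>s. \<phi> s x \<partial>p)"
    and "\<tau> \<ge> 1"
  shows "(\<integral>\<omega>. (\<Sum>t = 1..T.
              \<phi> (\<xi> t \<omega>) (dsgd X \<tau> (F / L) (\<lambda>i. \<phi> (\<xi> i \<omega>)) t) - \<phi> (\<xi> t \<omega>) xstar) \<partial>M)
         \<le> (283/10 * F\<^sup>2 * H + 2/3 * F * L + 4/3 * F\<^sup>2 * H * ln (real T)) * (real \<tau>)\<^sup>2
           + 8/3 * F * L * sqrt (real T)"
proof -
  interpret prob_space M by fact
  have cX: "closed X" "convex X" "X \<noteq> {}" using assms by auto
  have X0: "0 \<in> X" and Fp: "F > 0" and Lp: "L > 0" and tau1: "\<tau> \<ge> 1" using assms by auto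
  have Hlow: "H \<ge> L / (4 * F * sqrt (real \<tau>))" using assms by auto
  have sqt: "sqrt (real \<tau>) > 0" using tau1 by simp
  have LH: "L \<le> 4 * F * H * sqrt (real \<tau>)"
    using Hlow Fp sqt by (simp add: divide_le_eq mult_ac)
  have Hp: "H > 0"
  proof -
    have "L / (4 * F * sqrt (real \<tau>)) > 0" using Lp Fp sqt by simp
    then show ?thesis using Hlow by linarith
  qed
  define x where "x \<omega> k = dsgd X \<tau> (F / L) (\<lambda>i. \<phi> (\<xi> i \<omega>)) k" for \<omega> k
  define Good where "Good s \<longleftrightarrow> (\<forall>y\<in>X. norm (grad (\<phi> s) y) \<le> L) \<and> (\<forall>a b. norm (grad (\<phi> s) a - grad (\<phi> s) b) \<le> H * norm (a - b))" for s
  have rv: "\<xi> i \<in> measurable M p" if "1 \<le> i" for i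
    using iid_indep that unfolding indep_vars_def by auto
  have AEp: "AE s in p. Good s"
    using grad_bound smooth unfolding Good_def by eventually_elim auto
  have AEG: "AE \<omega> in M. \<forall>t\<in>{1..T + \<tau>}. Good (\<xi> t \<omega>)"
  proof (rule AE_finite_allI)
    fix t assume t: "t \<in> {1..T + \<tau>}"
    have eqd: "distr M p (\<xi> t) = p" using iid_distr t by auto
    have "AE s in distr M p (\<xi> t). Good s" unfolding eqd by (rule AEp)
    moreover have "\<xi> t \<in> measurable M p" using t by (intro rv) auto
    ultimately show "AE \<omega> in M. Good (\<xi> t \<omega>)" using AE_distrD by blast
  qed simp
  have sp: "\<xi> i \<omega> \<in> space p" if "1 \<le> i" "\<omega> \<in> space M" for i \<omega>
    using measurable_space[OF rv[OF that(1)] that(2)] .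
  have xX: "x \<omega> k \<in> X" for \<omega> k
    by (cases k) (auto simp: x_def X0 closest_point_in_set[OF cX(1) cX(3)])
  have normx: "norm (x \<omega> k) \<le> sqrt 2 * F" for \<omega> k
  proof -
    have "(1/2) * (norm (x \<omega> k - 0))\<^sup>2 \<le> F\<^sup>2" using diam xX[of \<omega> k] X0 by blast
    then have "(norm (x \<omega> k))\<^sup>2 \<le> 2 * F\<^sup>2" by simp
    then have "norm (x \<omega> k) \<le> sqrt (2 * F\<^sup>2)" by (simp add: real_le_rsqrt)
    also have "\<dots> = sqrt 2 * F" using Fp by (simp add: real_sqrt_mult)
    finally show ?thesis .
  qed
  define c1 where "c1 t \<omega> = \<phi> (\<xi> (t + \<tau>) \<omega>) (x \<omega> (t + \<tau>)) - \<phi> (\<xi> t \<omega>) (x \<omega> (t + \<tau>))" for t \<omega>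
  define c2 where "c2 k \<omega> = \<phi> (\<xi> (1 + k) \<omega>) 0 - \<phi> (\<xi> (T + 1 + k) \<omega>) 0" for k \<omega>
  define B where "B = 2 * F * L * sqrt (real T) + H * ((real \<tau>)\<^sup>2 * F\<^sup>2 * (1 + ln (real T))) + real \<tau> * (L * (sqrt 2 * F))"
  define R where "R \<omega> = (\<Sum>t = 1..T. \<phi> (\<xi> t \<omega>) (dsgd X \<tau> (F / L) (\<lambda>i. \<phi> (\<xi> i \<omega>)) t) - \<phi> (\<xi> t \<omega>) xstar)" for \<omega>
  have path: "AE \<omega> in M. R \<omega> \<le> B + (\<Sum>t = 1..T. c1 t \<omega>) + (\<Sum>k<\<tau>. c2 k \<omega>)"
    using AEG
  proof (rule AE_mp[OF _ AE_I2[OF impI]])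
    fix \<omega> assume \<omega>: "\<omega> \<in> space M" and G: "\<forall>t\<in>{1..T + \<tau>}. Good (\<xi> t \<omega>)"
    have "R \<omega> \<le> 2 * F * L * sqrt (real T) + H * ((real \<tau>)\<^sup>2 * F\<^sup>2 * (1 + ln (real T))) + real \<tau> * (L * (sqrt 2 * F))
         + (\<Sum>t = 1..T. \<phi> (\<xi> (t + \<tau>) \<omega>) (dsgd X \<tau> (F / L) (\<lambda>i. \<phi> (\<xi> i \<omega>)) (t + \<tau>)) - \<phi> (\<xi> t \<omega>) (dsgd X \<tau> (F / L) (\<lambda>i. \<phi> (\<xi> i \<omega>)) (t + \<tau>)))
         + (\<Sum>k<\<tau>. \<phi> (\<xi> (1 + k) \<omega>) 0 - \<phi> (\<xi> (T + 1 + k) \<omega>) 0)"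
      unfolding R_def
    proof (rule pathwise[OF cX X0 xstar(1) Fp Lp less_imp_le[OF Hp] diam, where f="\<lambda>i. \<phi> (\<xi> i \<omega>)"])
      fix t assume t: "1 \<le> t" "t \<le> T + \<tau>"
      show "convex_on UNIV (\<phi> (\<xi> t \<omega>))" using convex sp[OF t(1) \<omega>] by blast
      show "\<phi> (\<xi> t \<omega>) differentiable at y" for y using diff sp[OF t(1) \<omega>] by blast
      show "\<forall>y\<in>X. norm (grad (\<phi> (\<xi> t \<omega>)) y) \<le> L" using G t unfolding Good_def by auto
    next
      fix t assume t: "1 \<le> t" "t \<le> T"
      show "\<forall>a b. norm (grad (\<phi> (\<xi> t \<omega>)) a - grad (\<phi> (\<xi> t \<omega>)) b) \<le> H * norm (a - b)"
        using G t unfolding Good_def by auto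
    qed
    then show "R \<omega> \<le> B + (\<Sum>t = 1..T. c1 t \<omega>) + (\<Sum>k<\<tau>. c2 k \<omega>)"
      by (simp add: B_def c1_def c2_def x_def)
  qed
  have int0: "integrable M (\<lambda>\<omega>. \<phi> (\<xi> j \<omega>) 0)" if "1 \<le> j" for j
  proof -
    have "integrable (distr M p (\<xi> j)) (\<lambda>s. \<phi> s 0)" using integ X0 iid_distr that by simp
    then show ?thesis using integrable_distr_eq[OF rv[OF that], of "\<lambda>s. \<phi> s 0"] meas by simp
  qed
  have E0: "(\<integral>\<omega>. \<phi> (\<xi> j \<omega>) 0 \<partial>M) = (\<integral>s. \<phi> s 0 \<partial>p)" if "1 \<le> j" for j
  proof -
    have "(\<integral>\<omega>. \<phi> (\<xi> j \<omega>) 0 \<partial>M) = integral\<^sup>L (distr M p (\<xi> j)) (\<lambda>s. \<phi> s 0)"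
      using integral_distr[OF rv[OF that], of "\<lambda>s. \<phi> s 0"] meas by simp
    then show ?thesis using iid_distr that by simp
  qed
  have intV: "integrable M (\<lambda>\<omega>. \<phi> (\<xi> j \<omega>) (x \<omega> (t + \<tau>)))" if "1 \<le> t" "t \<le> j" "j \<le> T + \<tau>" for t j
  proof (rule Bochner_Integration.integrable_bound[where f="\<lambda>\<omega>. \<bar>\<phi> (\<xi> j \<omega>) 0\<bar> + L * (sqrt 2 * F)"])
    show "integrable M (\<lambda>\<omega>. \<bar>\<phi> (\<xi> j \<omega>) 0\<bar> + L * (sqrt 2 * F))"
      using int0[of j] that by auto
    show "(\<lambda>\<omega>. \<phi> (\<xi> j \<omega>) (x \<omega> (t + \<tau>))) \<in> borel_measurable M"
      unfolding x_def by (rule shift_measurable[OF iid_indep iid_distr meas diff cX]) (use that in auto)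
    show "AE \<omega> in M. norm (\<phi> (\<xi> j \<omega>) (x \<omega> (t + \<tau>))) \<le> norm (\<bar>\<phi> (\<xi> j \<omega>) 0\<bar> + L * (sqrt 2 * F))"
      using AEG
    proof (rule AE_mp[OF _ AE_I2[OF impI]])
      fix \<omega> assume \<omega>: "\<omega> \<in> space M" and G: "\<forall>t\<in>{1..T + \<tau>}. Good (\<xi> t \<omega>)"
      have j1: "1 \<le> j" using that by simp
      have "\<bar>\<phi> (\<xi> j \<omega>) (x \<omega> (t + \<tau>))\<bar> \<le> \<bar>\<phi> (\<xi> j \<omega>) 0\<bar> + L * (sqrt 2 * F)"
      proof (rule abs_bound0[OF _ _ _ xX X0 normx])
        show "convex_on UNIV (\<phi> (\<xi> j \<omega>))" using convex sp[OF j1 \<omega>] by blast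
        show "\<phi> (\<xi> j \<omega>) differentiable at y" for y using diff sp[OF j1 \<omega>] by blast
        show "\<forall>y\<in>X. norm (grad (\<phi> (\<xi> j \<omega>)) y) \<le> L" using G that unfolding Good_def by auto
      qed (use Lp in auto)
      then show "norm (\<phi> (\<xi> j \<omega>) (x \<omega> (t + \<tau>))) \<le> norm (\<bar>\<phi> (\<xi> j \<omega>) 0\<bar> + L * (sqrt 2 * F))"
        by simp
    qed
  qed
  have Q: "\<And>j. t \<le> j \<Longrightarrow> 1 \<le> j \<Longrightarrow> (\<integral>\<omega>. \<phi> (\<xi> j \<omega>) (x \<omega> (t + \<tau>)) \<partial>M) = (\<integral>\<omega>. \<phi> (\<xi> t \<omega>) (x \<omega> (t + \<tau>)) \<partial>M)"
    if "1 \<le> t" for t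
    unfolding x_def
    using shift_integral[OF iid_indep iid_distr meas diff cX, of t _ \<tau> "F / L"]
          shift_integral[OF iid_indep iid_distr meas diff cX, of t t \<tau> "F / L"] that by simp
  have ic1: "integrable M (c1 t)" and Ec1: "integral\<^sup>L M (c1 t) = 0" if "t \<in> {1..T}" for t
  proof -
    have i1: "integrable M (\<lambda>\<omega>. \<phi> (\<xi> (t + \<tau>) \<omega>) (x \<omega> (t + \<tau>)))" using that by (intro intV) auto
    have i2: "integrable M (\<lambda>\<omega>. \<phi> (\<xi> t \<omega>) (x \<omega> (t + \<tau>)))" using that by (intro intV) auto
    show "integrable M (c1 t)" unfolding c1_def[abs_def] using i1 i2 by simp
    show "integral\<^sup>L M (c1 t) = 0" unfolding c1_def[abs_def]
      using i1 i2 Q[of t "t + \<tau>"] that by simp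
  qed
  have ic2: "integrable M (c2 k)" and Ec2: "integral\<^sup>L M (c2 k) = 0" for k
  proof -
    show "integrable M (c2 k)" unfolding c2_def[abs_def] using int0[of "1 + k"] int0[of "T + 1 + k"] by simp
    show "integral\<^sup>L M (c2 k) = 0" unfolding c2_def[abs_def]
      using int0[of "1 + k"] int0[of "T + 1 + k"] E0[of "1 + k"] E0[of "T + 1 + k"] by simp
  qed
  have intRHS: "integrable M (\<lambda>\<omega>. B + (\<Sum>t = 1..T. c1 t \<omega>) + (\<Sum>k<\<tau>. c2 k \<omega>))"
    by (intro Bochner_Integration.integrable_add Bochner_Integration.integrable_sum integrable_const ic1 ic2) auto
  have ERHS: "(\<integral>\<omega>. B + (\<Sum>t = 1..T. c1 t \<omega>) + (\<Sum>k<\<tau>. c2 k \<omega>) \<partial>M) = B"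
  proof -
    have s1: "integrable M (\<lambda>\<omega>. \<Sum>t = 1..T. c1 t \<omega>)"
      by (intro Bochner_Integration.integrable_sum ic1)
    have s2: "integrable M (\<lambda>\<omega>. \<Sum>k<\<tau>. c2 k \<omega>)"
      by (intro Bochner_Integration.integrable_sum ic2)
    have e1: "(\<integral>\<omega>. (\<Sum>t = 1..T. c1 t \<omega>) \<partial>M) = 0"
      using ic1 Ec1 by (simp add: integral_sum)
    have e2: "(\<integral>\<omega>. (\<Sum>k<\<tau>. c2 k \<omega>) \<partial>M) = 0"
      using ic2 Ec2 by (simp add: integral_sum)
    have "(\<integral>\<omega>. B + (\<Sum>t = 1..T. c1 t \<omega>) + (\<Sum>k<\<tau>. c2 k \<omega>) \<partial>M)
        = (\<integral>\<omega>. B + (\<Sum>t = 1..T. c1 t \<omega>) \<partial>M) + (\<integral>\<omega>. (\<Sum>k<\<tau>. c2 k \<omega>) \<partial>M)"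
      by (rule Bochner_Integration.integral_add[OF Bochner_Integration.integrable_add[OF integrable_const s1] s2])
    also have "(\<integral>\<omega>. B + (\<Sum>t = 1..T. c1 t \<omega>) \<partial>M) = (\<integral>\<omega>. B \<partial>M) + (\<integral>\<omega>. (\<Sum>t = 1..T. c1 t \<omega>) \<partial>M)"
      by (rule Bochner_Integration.integral_add[OF integrable_const s1])
    finally show ?thesis using e1 e2 by (simp add: prob_space)
  qed
  have lnT: "ln (real T) \<ge> 0" by (cases T) auto
  have Bb: "B \<le> (283/10 * F\<^sup>2 * H + 2/3 * F * L + 4/3 * F\<^sup>2 * H * ln (real T)) * (real \<tau>)\<^sup>2
           + 8/3 * F * L * sqrt (real T)"
  proof -
    have st: "sqrt (real \<tau>) \<le> real \<tau>"
    proof -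
      have "sqrt (real \<tau>) \<le> sqrt (real \<tau> * real \<tau>)" using tau1 by (intro real_sqrt_le_mono) simp
      then show ?thesis by simp
    qed
    have s2: "sqrt 2 \<le> (3/2::real)"
    proof -
      have "sqrt 2 \<le> sqrt ((3/2::real)\<^sup>2)" by (rule real_sqrt_le_mono) (simp add: power2_eq_square)
      then show ?thesis by simp
    qed
    have t1: "real \<tau> * (L * (sqrt 2 * F)) \<le> 6 * F\<^sup>2 * H * (real \<tau>)\<^sup>2"
    proof -
      have "real \<tau> * (L * (sqrt 2 * F)) \<le> real \<tau> * ((4 * F * H * real \<tau>) * ((3/2) * F))"
        using LH st s2 Fp Hp Lp tau1
        by (intro mult_left_mono mult_mono) (auto intro: order_trans[OF LH] mult_left_mono)
      then show ?thesis by (simp add: power2_eq_square mult_ac)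
    qed
    have t2: "H * ((real \<tau>)\<^sup>2 * F\<^sup>2 * (1 + ln (real T))) = F\<^sup>2 * H * (real \<tau>)\<^sup>2 + F\<^sup>2 * H * ln (real T) * (real \<tau>)\<^sup>2"
      by (simp add: algebra_simps)
    have t3: "F\<^sup>2 * H * ln (real T) * (real \<tau>)\<^sup>2 \<le> 4/3 * F\<^sup>2 * H * ln (real T) * (real \<tau>)\<^sup>2"
      using lnT Hp by (intro mult_right_mono) (auto intro!: mult_nonneg_nonneg)
    have t4: "0 \<le> F * L * (real \<tau>)\<^sup>2" using Fp Lp by simp
    have t5: "0 \<le> F * L * sqrt (real T)" using Fp Lp by simp
    have t6: "0 \<le> F\<^sup>2 * H * (real \<tau>)\<^sup>2" using Hp by simp
    show ?thesis unfolding B_def using t1 t2 t3 t4 t5 t6 by (simp add: algebra_simps)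
  qed
  show ?thesis
  proof (cases "integrable M R")
    case True
    have "integral\<^sup>L M R \<le> (\<integral>\<omega>. B + (\<Sum>t = 1..T. c1 t \<omega>) + (\<Sum>k<\<tau>. c2 k \<omega>) \<partial>M)"
      by (rule integral_mono_AE[OF True intRHS path])
    then show ?thesis using ERHS Bb by (simp add: R_def[abs_def])
  next
    case False
    then have "integral\<^sup>L M R = 0" by (rule not_integrable_integral_eq)
    moreover have "0 \<le> B"
      unfolding B_def using Fp Lp Hp lnT by (auto intro!: add_nonneg_nonneg mult_nonneg_nonneg)
    ultimately show ?thesis using Bb by (simp add: R_def[abs_def])
  qed
qed

end
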